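(* Assume in addition $\eta^{i,l}_n=0$ almost surely for all $n,i,l$. Let $m_0$ be a positive integer with the covering property and $p_{m_0}:=\mathbb E[\mathcal G_{[0,m_0)}]$ (which is positive). For $k\ge1$ define the random variable $\Lambda_0(m_0,k):=\gamma(1-\gamma)^{m_0-1}\frac1k\sum_{s=1}^k\mathcal G_{[(s-1)m_0,sm_0)}$ (and $\Lambda_0(m_0,0):=0$). Then for every $k\ge0$, every $n\in[km_0,(k+1)m_0)$ and every $l\in\{1,\dots,d\}$, almost surely $$\mathcal D(\mathfrak x^l_n)\le \mathcal D(\mathfrak x^l_0)\,e^{-\Lambda_0(m_0,k)k},\qquad \max_{i,j}\|\mathbf x^i_n-\mathbf x^j_n\|_\infty\le\max_{i,j}\|\mathbf x^i_0-\mathbf x^j_0\|_\infty\,e^{-\Lambda_0(m_0,k)k},$$ and $\lim_{k\to\infty}\Lambda_0(m_0,k)=p_{m_0}\gamma(1-\gamma)^{m_0-1}$ almost surely.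
   Context: Setting (random batch CBO). Fix integers $N\ge2$, $d\ge1$, batch size $P\ge2$, drift $\gamma\in(0,1)$ and noise level $\zeta\ge0$; $\mathcal N=\{1,\dots,N\}$, $\mathbf e_1,\dots,\mathbf e_d$ the standard basis of $\mathbb R^d$. For each nonempty $S\subseteq\mathcal N$ and $j\in\mathcal N$ let $\omega_{S,j}:(\mathbb R^d)^N\to[0,\infty)$ satisfy $\sum_{j\in S}\omega_{S,j}(X)=1$ and $\omega_{S,j}(X)=0$ for $j\notin S$. Let $\mathcal A$ be the finite set of partitions of $\mathcal N$ into $\lceil N/P\rceil$ batches, all of size exactly $P$ except possibly one of size at most $P$. Let $(\mathcal B^n)_{n\ge0}$ be i.i.d. uniform on $\mathcal A$, and $[i]_n$ the batch of $\mathcal B^n$ containing $i$. Let $(\eta^{i,l}_n)_{i\in\mathcal N,1\le l\le d}$, $n\ge0$, be random arrays, i.i.d. in $n$, with $\mathbb E\eta^{i,l}_n=0$ and $\mathbb E|\eta^{i,l}_n|^2\le\zeta^2$. The initial data $X_0=(\mathbf x^1_0,\dots,\mathbf x^N_0)\in(\mathbb R^d)^N$ (deterministic or random), the batch sequence and the noise sequence are mutually independent. The process evolves by $$\mathbf x^i_{n+1}=\mathbf x^i_n-\gamma(\mathbf x^i_n-\bar{\mathbf x}^{[i]_n,*}_n)-\sum_{l=1}^d(x^{i,l}_n-\bar x^{[i]_n,*,l}_n)\eta^{i,l}_n\mathbf e_l,\qquad \bar{\mathbf x}^{S,*}_n:=\sum_{j=1}^N\omega_{S,j}(X_n)\mathbf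 x^j_n,$$ where $X_n=(\mathbf x^1_n,\dots,\mathbf x^N_n)$, $x^{i,l}_n$ is the $l$-th component of $\mathbf x^i_n$ and $\bar x^{S,*,l}_n$ that of $\bar{\mathbf x}^{S,*}_n$. Let $\mathfrak x^l_n:=(x^{1,l}_n,\dots,x^{N,l}_n)^\top$ and, for $\mathbf z\in\mathbb R^N$, $\mathcal D(\mathbf z):=\max_iz_i-\min_iz_i$. For $n\ge0,m\ge1$, $\mathcal G_{[n,n+m)}:=\min_{i,j}|\{r:n\le r<n+m,[i]_r=[j]_r\}|$. A positive integer $m_0$ has the covering property if there exist partitions $\mathcal P^1,\dots,\mathcal P^{m_0}\in\mathcal A$ such that every pair $i,j\in\mathcal N$ lies in a common block of some $\mathcal P^k$. *)

theory Defs
  imports "HOL-Probability.Probability"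
begin

text \<open>Particles are indexed by a finite type 'n (N = CARD('n)), coordinates by a
finite type 'd (d = CARD('d)).  A configuration is a map 'n \<Rightarrow> real^'d.\<close>

type_synonym ('n, 'd) config = "'n \<Rightarrow> real^'d"

definition batch_partitions :: "nat \<Rightarrow> ('n::finite) set set set" where
  "batch_partitions P = {Q. partition_on (UNIV :: 'n set) Q
        \<and> card Q = nat \<lceil>real CARD('n) / real P\<rceil>
        \<and> (\<forall>S\<in>Q. card S \<le> P)
        \<and> card {S\<in>Q. card S \<noteq> P} \<le> 1}"

definition batch_of :: "'n set set \<Rightarrow> 'n \<Rightarrow> 'n set" where
  "batch_of Q i = (THE S. S \<in> Q \<and> i \<in> S)"

definition wmean :: "('n set \<Rightarrow> 'n \<Rightarrow> ('n::finite, 'd) config \<Rightarrow> real)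
     \<Rightarrow> 'n set \<Rightarrow> ('n, 'd) config \<Rightarrow> real^'d" where
  "wmean w S X = (\<Sum>j\<in>UNIV. w S j X *\<^sub>R X j)"

definition cbo_step :: "('n set \<Rightarrow> 'n \<Rightarrow> ('n::finite, 'd::finite) config \<Rightarrow> real) \<Rightarrow> real
     \<Rightarrow> 'n set set \<Rightarrow> ('n \<Rightarrow> 'd \<Rightarrow> real) \<Rightarrow> ('n, 'd) config \<Rightarrow> ('n, 'd) config" where
  "cbo_step w \<gamma> Q eta X = (\<lambda>i.
      X i - \<gamma> *\<^sub>R (X i - wmean w (batch_of Q i) X)
          - (\<chi> l. (X i $ l - wmean w (batch_of Q i) X $ l) * eta i l))"

primrec cbo_traj :: "('n set \<Rightarrow> 'n \<Rightarrow> ('n::finite, 'd::finite) config \<Rightarrow> real) \<Rightarrow> real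
     \<Rightarrow> (nat \<Rightarrow> 'n set set) \<Rightarrow> (nat \<Rightarrow> 'n \<Rightarrow> 'd \<Rightarrow> real) \<Rightarrow> ('n, 'd) config
     \<Rightarrow> nat \<Rightarrow> ('n, 'd) config" where
  "cbo_traj w \<gamma> Bs etas X0 0 = X0"
| "cbo_traj w \<gamma> Bs etas X0 (Suc n) = cbo_step w \<gamma> (Bs n) (etas n) (cbo_traj w \<gamma> Bs etas X0 n)"

definition diamD :: "('n::finite, 'd::finite) config \<Rightarrow> 'd \<Rightarrow> real" where
  "diamD X l = (MAX i. X i $ l) - (MIN i. X i $ l)"

definition diam_inf :: "('n::finite, 'd::finite) config \<Rightarrow> real" where
  "diam_inf X = (MAX ij \<in> (UNIV :: ('n \<times> 'n) set). infnorm (X (fst ij) - X (snd ij)))"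

definition Gcount :: "(nat \<Rightarrow> ('n::finite) set set) \<Rightarrow> nat \<Rightarrow> nat \<Rightarrow> nat" where
  "Gcount Bs n m = (MIN ij \<in> (UNIV :: ('n \<times> 'n) set).
      card {r. n \<le> r \<and> r < n + m \<and> batch_of (Bs r) (fst ij) = batch_of (Bs r) (snd ij)})"

definition covering :: "nat \<Rightarrow> nat \<Rightarrow> 'n::finite itself \<Rightarrow> bool" where
  "covering P m0 _ = (\<exists>Ps :: nat \<Rightarrow> 'n set set. (\<forall>k\<in>{1..m0}. Ps k \<in> batch_partitions P)
      \<and> (\<forall>i j. \<exists>k\<in>{1..m0}. \<exists>S\<in>Ps k. i \<in> S \<and> j \<in> S))"

definition Lambda0 :: "real \<Rightarrow> (nat \<Rightarrow> ('n::finite) set set) \<Rightarrow> nat \<Rightarrow> nat \<Rightarrow> real" where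
  "Lambda0 \<gamma> Bs m0 k = (if k = 0 then 0 else
      \<gamma> * (1 - \<gamma>) ^ (m0 - 1) * (1 / real k) *
        (\<Sum>s=1..k. real (Gcount Bs ((s - 1) * m0) m0)))"

end

theory Submission
  imports Defs
begin


lemma rec_shift:
  fixes y :: "nat \<Rightarrow> 'n::finite \<Rightarrow> real" and \<omega> :: "nat \<Rightarrow> 'n \<Rightarrow> 'n \<Rightarrow> real"
  assumes ws: "\<And>t i. (\<Sum>j\<in>UNIV. \<omega> t i j) = 1"
    and rec: "\<And>t i. y (Suc t) i = (1-\<gamma>) * y t i + \<gamma> * (\<Sum>j\<in>UNIV. \<omega> t i j * y t j)"
  shows "y (Suc t) i - c = (1-\<gamma>) * (y t i - c) + \<gamma> * (\<Sum>j\<in>UNIV. \<omega> t i j * (y t j - c))"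
proof -
  have "(\<Sum>j\<in>UNIV. \<omega> t i j * (y t j - c)) = (\<Sum>j\<in>UNIV. \<omega> t i j * y t j) - c * (\<Sum>j\<in>UNIV. \<omega> t i j)"
    by (simp add: algebra_simps sum_subtractf sum_distrib_left)
  then have h: "(\<Sum>j\<in>UNIV. \<omega> t i j * (y t j - c)) = (\<Sum>j\<in>UNIV. \<omega> t i j * y t j) - c"
    using ws[of t i] by simp
  then have "\<gamma> * (\<Sum>j\<in>UNIV. \<omega> t i j * (y t j - c)) = \<gamma> * (\<Sum>j\<in>UNIV. \<omega> t i j * y t j) - \<gamma> * c"
    by (simp add: right_diff_distrib)
  then show ?thesis using rec[of t i] by (simp add: algebra_simps)
qed

locale dyn =
  fixes y :: "nat \<Rightarrow> 'n::finite \<Rightarrow> real" and \<omega> :: "nat \<Rightarrow> 'n \<Rightarrow> 'n \<Rightarrow> real" and \<gamma> :: real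
  assumes g0: "0 < \<gamma>" and g1: "\<gamma> < 1"
    and wn: "\<And>t i j. \<omega> t i j \<ge> 0"
    and ws: "\<And>t i. (\<Sum>j\<in>UNIV. \<omega> t i j) = 1"
    and rec: "\<And>t i. y (Suc t) i = (1-\<gamma>) * y t i + \<gamma> * (\<Sum>j\<in>UNIV. \<omega> t i j * y t j)"
begin

lemma shiftc: "y (Suc t) i - c = (1-\<gamma>) * (y t i - c) + \<gamma> * (\<Sum>j\<in>UNIV. \<omega> t i j * (y t j - c))"
  by (rule rec_shift[where y=y and \<omega>=\<omega> and \<gamma>=\<gamma>, OF ws rec])

lemma neg: "dyn (\<lambda>t k. - y t k) \<omega> \<gamma>"
proof
  show "- y (Suc t) i = (1-\<gamma>) * (- y t i) + \<gamma> * (\<Sum>j\<in>UNIV. \<omega> t i j * (- y t j))" for t i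
    using rec[of t i] by (simp add: sum_negf)
qed (use g0 g1 wn ws in auto)

lemma L1:
  assumes "\<And>k. lo \<le> y 0 k"
  shows "lo \<le> y t k"
proof (induction t arbitrary: k)
  case 0 then show ?case using assms by simp
next
  case (Suc t)
  have "0 \<le> (1-\<gamma>) * (y t k - lo) + \<gamma> * (\<Sum>j\<in>UNIV. \<omega> t k j * (y t j - lo))"
    using Suc g0 g1 wn by (intro add_nonneg_nonneg mult_nonneg_nonneg sum_nonneg) auto
  then show ?case using shiftc[of t k lo] by simp
qed

lemma L2:
  assumes "\<And>k. lo \<le> y 0 k"
  shows "(1-\<gamma>)^t * (y 0 k - lo) \<le> y t k - lo"
proof (induction t arbitrary: k)
  case 0 then show ?case by simp
next
  case (Suc t)
  have "0 \<le> \<gamma> * (\<Sum>j\<in>UNIV. \<omega> t k j * (y t j - lo))"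
    using L1[OF assms] g0 wn by (intro mult_nonneg_nonneg sum_nonneg) auto
  moreover have "(1-\<gamma>) * ((1-\<gamma>)^t * (y 0 k - lo)) \<le> (1-\<gamma>) * (y t k - lo)"
    using Suc g1 by (intro mult_left_mono) auto
  ultimately show ?case using shiftc[of t k lo] by (simp add: algebra_simps)
qed

definition T where "T lo r i = (\<Sum>j\<in>UNIV. \<omega> r i j * (y 0 j - lo))"

lemma L3:
  assumes "\<And>k. lo \<le> y 0 k"
  shows "\<gamma> * (1-\<gamma>)^(t-1) * (\<Sum>r<t. T lo r i) \<le> y t i - lo"
proof (induction t arbitrary: i)
  case 0 then show ?case using assms by simp
next
  case (Suc t)
  have A: "(1-\<gamma>) * (\<gamma> * (1-\<gamma>)^(t-1) * (\<Sum>r<t. T lo r i)) = \<gamma> * (1-\<gamma>)^t * (\<Sum>r<t. T lo r i)"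
    by (cases t) auto
  have B: "(1-\<gamma>) * (\<gamma> * (1-\<gamma>)^(t-1) * (\<Sum>r<t. T lo r i)) \<le> (1-\<gamma>) * (y t i - lo)"
    using Suc g1 by (intro mult_left_mono) auto
  have C: "\<gamma> * (1-\<gamma>)^t * T lo t i \<le> \<gamma> * (\<Sum>j\<in>UNIV. \<omega> t i j * (y t j - lo))"
  proof -
    have "(1-\<gamma>)^t * T lo t i = (\<Sum>j\<in>UNIV. \<omega> t i j * ((1-\<gamma>)^t * (y 0 j - lo)))"
      unfolding T_def by (simp add: sum_distrib_left algebra_simps)
    also have "\<dots> \<le> (\<Sum>j\<in>UNIV. \<omega> t i j * (y t j - lo))"
      using L2[OF assms] wn by (intro sum_mono mult_left_mono) auto
    finally show ?thesis using g0 by (simp add: mult.assoc mult_left_mono)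
  qed
  have "\<gamma> * (1-\<gamma>)^(Suc t - 1) * (\<Sum>r<Suc t. T lo r i)
      = (1-\<gamma>) * (\<gamma> * (1-\<gamma>)^(t-1) * (\<Sum>r<t. T lo r i)) + \<gamma> * (1-\<gamma>)^t * T lo t i"
    using A by (simp add: algebra_simps)
  also have "\<dots> \<le> y (Suc t) i - lo" using B C shiftc[of t i lo] by linarith
  finally show ?case .
qed

lemma window:
  assumes lo: "\<And>k. lo \<le> y 0 k" and hi: "\<And>k. y 0 k \<le> hi"
    and same: "\<And>r. r < m \<Longrightarrow> sameb r \<Longrightarrow> \<omega> r i = \<omega> r j"
  shows "y m j - y m i \<le> (hi - lo) * (1 - \<gamma> * (1-\<gamma>)^(m-1) * card {r. r < m \<and> sameb r})"
proof -
  interpret N: dyn "\<lambda>t k. - y t k" \<omega> \<gamma> by (rule neg)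
  have hi': "\<And>k. -hi \<le> - y 0 k" using hi by simp
  have a: "\<gamma> * (1-\<gamma>)^(m-1) * (\<Sum>r<m. T lo r i) \<le> y m i - lo" by (rule L3[OF lo])
  have b: "\<gamma> * (1-\<gamma>)^(m-1) * (\<Sum>r<m. N.T (-hi) r j) \<le> - y m j - - hi" by (rule N.L3[OF hi'])
  define U where "U r = T lo r i + N.T (-hi) r j" for r
  have U0: "U r \<ge> 0" for r
    unfolding U_def T_def N.T_def using lo hi wn
    by (intro add_nonneg_nonneg sum_nonneg mult_nonneg_nonneg) auto
  have Us: "U r = hi - lo" if "r < m" "sameb r" for r
  proof -
    have "U r = (\<Sum>k\<in>UNIV. \<omega> r j k * (hi - lo))"
      unfolding U_def T_def N.T_def using same[OF that]
      by (simp add: sum.distrib[symmetric] algebra_simps)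
    also have "\<dots> = hi - lo" using ws[of r j] by (simp add: sum_distrib_right[symmetric])
    finally show ?thesis .
  qed
  have "card {r. r < m \<and> sameb r} * (hi - lo) = (\<Sum>r\<in>{r. r < m \<and> sameb r}. U r)"
    using Us by simp
  also have "\<dots> \<le> (\<Sum>r<m. U r)"
    by (rule sum_mono2) (auto simp: U0)
  finally have c: "card {r. r < m \<and> sameb r} * (hi - lo) \<le> (\<Sum>r<m. U r)" .
  have "\<gamma> * (1-\<gamma>)^(m-1) \<ge> 0" using g0 g1 by simp
  then have "\<gamma> * (1-\<gamma>)^(m-1) * (card {r. r < m \<and> sameb r} * (hi - lo)) \<le> \<gamma> * (1-\<gamma>)^(m-1) * (\<Sum>r<m. U r)"
    by (rule mult_left_mono[OF c])
  also have "\<dots> = \<gamma> * (1-\<gamma>)^(m-1) * (\<Sum>r<m. T lo r i) + \<gamma> * (1-\<gamma>)^(m-1) * (\<Sum>r<m. N.T (-hi) r j)"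
    by (simp add: U_def sum.distrib algebra_simps)
  finally show ?thesis using a b by (simp add: algebra_simps)
qed

end


lemma batch_of_unique:
  assumes "partition_on UNIV Q" "S \<in> Q" "i \<in> S"
  shows "batch_of Q i = S"
  unfolding batch_of_def
proof (rule the_equality)
  show "S \<in> Q \<and> i \<in> S" using assms by simp
  fix S' assume "S' \<in> Q \<and> i \<in> S'"
  then show "S' = S" using assms partition_onD2[OF assms(1)]
    by (meson disjnt_iff pairwiseD)
qed

lemma batch_of_mem:
  assumes "partition_on UNIV Q"
  shows "batch_of Q i \<in> Q \<and> i \<in> batch_of Q i"
proof -
  obtain S where "S \<in> Q" "i \<in> S" using partition_onD1[OF assms] by blast
  then show ?thesis using batch_of_unique[OF assms] by simp
qed

lemma bp_partition: "Q \<in> batch_partitions P \<Longrightarrow> partition_on UNIV Q"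
  by (simp add: batch_partitions_def)

locale cbo =
  fixes w :: "'n::finite set \<Rightarrow> 'n \<Rightarrow> ('n \<Rightarrow> real^'d::finite) \<Rightarrow> real"
    and \<gamma> :: real and Bs :: "nat \<Rightarrow> 'n set set" and X0 :: "'n \<Rightarrow> real^'d"
  assumes g0: "0 < \<gamma>" and g1: "\<gamma> < 1"
    and w_nonneg: "\<And>S j X. S \<noteq> {} \<Longrightarrow> w S j X \<ge> 0"
    and w_sum: "\<And>S X. S \<noteq> {} \<Longrightarrow> (\<Sum>j\<in>S. w S j X) = 1"
    and w_out: "\<And>S j X. S \<noteq> {} \<Longrightarrow> j \<notin> S \<Longrightarrow> w S j X = 0"
    and part: "\<And>r. partition_on UNIV (Bs r)"
begin

definition X where "X t = cbo_traj w \<gamma> Bs (\<lambda>_ _ _. 0) X0 t"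
definition om where "om t i j = w (batch_of (Bs t) i) j (X t)"

lemma ne: "batch_of (Bs t) i \<noteq> {}"
  using batch_of_mem[OF part] by blast

lemma om_sum: "(\<Sum>j\<in>UNIV. om t i j) = 1"
proof -
  let ?S = "batch_of (Bs t) i"
  have "(\<Sum>j\<in>UNIV. om t i j) = (\<Sum>j\<in>?S. om t i j)"
    by (rule sum.mono_neutral_right) (auto simp: om_def w_out[OF ne])
  then show ?thesis by (simp add: om_def w_sum[OF ne])
qed

lemma dynl: "dyn (\<lambda>t i. X (a + t) i $ l) (\<lambda>t. om (a + t)) \<gamma>"
proof
  fix t i
  show "X (a + Suc t) i $ l = (1-\<gamma>) * X (a + t) i $ l + \<gamma> * (\<Sum>j\<in>UNIV. om (a + t) i j * X (a + t) j $ l)"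
    by (simp add: X_def om_def cbo_step_def wmean_def sum_component algebra_simps)
qed (use g0 g1 om_sum in \<open>auto simp: om_def intro!: w_nonneg ne\<close>)

lemma bounds:
  assumes "\<And>k. lo \<le> X a k $ l" "\<And>k. X a k $ l \<le> hi"
  shows "lo \<le> X (a + t) k $ l \<and> X (a + t) k $ l \<le> hi"
proof -
  interpret D: dyn "\<lambda>t i. X (a + t) i $ l" "\<lambda>t. om (a + t)" \<gamma> by (rule dynl)
  interpret N: dyn "\<lambda>t i. - X (a + t) i $ l" "\<lambda>t. om (a + t)" \<gamma> by (rule D.neg)
  show ?thesis using D.L1[of lo t k] N.L1[of "-hi" t k] assms by simp
qed

lemma diam_mono: "diamD (X (a + t)) l \<le> diamD (X a) l"
proof -
  let ?lo = "MIN i. X a i $ l" and ?hi = "MAX i. X a i $ l"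
  have b: "?lo \<le> X (a + t) k $ l \<and> X (a + t) k $ l \<le> ?hi" for k
    by (rule bounds) auto
  have h1: "(MAX i. X (a + t) i $ l) \<le> ?hi" using b by (simp add: Max_le_iff)
  have h2: "?lo \<le> (MIN i. X (a + t) i $ l)" using b by (simp add: Min_ge_iff)
  show ?thesis unfolding diamD_def using h1 h2 by linarith
qed

lemma card_shift: fixes a m :: nat shows "card {r. r < m \<and> Pr (a + r)} = card {r. a \<le> r \<and> r < a + m \<and> Pr r}"
proof -
  have "{r. a \<le> r \<and> r < a + m \<and> Pr r} = (\<lambda>r. a + r) ` {r. r < m \<and> Pr (a + r)}"
  proof (intro set_eqI iffI)
    fix x assume "x \<in> {r. a \<le> r \<and> r < a + m \<and> Pr r}"
    then have "x = a + (x - a)" "x - a \<in> {r. r < m \<and> Pr (a + r)}" by auto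
    then show "x \<in> (\<lambda>r. a + r) ` {r. r < m \<and> Pr (a + r)}" by (rule image_eqI)
  qed auto
  then show ?thesis by (simp add: card_image inj_on_def)
qed

lemma diam_window:
  "diamD (X (a + m)) l \<le> diamD (X a) l * (1 - \<gamma> * (1-\<gamma>)^(m-1) * Gcount Bs a m)"
proof -
  interpret D: dyn "\<lambda>t i. X (a + t) i $ l" "\<lambda>t. om (a + t)" \<gamma> by (rule dynl)
  let ?lo = "MIN i. X a i $ l" and ?hi = "MAX i. X a i $ l"
  have "(MIN i. X (a + m) i $ l) \<in> range (\<lambda>i. X (a + m) i $ l)" by (rule Min_in) auto
  then obtain i where i: "X (a + m) i $ l = (MIN i. X (a + m) i $ l)" by (metis (no_types, lifting) rangeE)
  have "(MAX i. X (a + m) i $ l) \<in> range (\<lambda>i. X (a + m) i $ l)" by (rule Max_in) auto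
  then obtain j where j: "X (a + m) j $ l = (MAX i. X (a + m) i $ l)" by (metis (no_types, lifting) rangeE)
  let ?sb = "\<lambda>r. batch_of (Bs (a + r)) i = batch_of (Bs (a + r)) j"
  have "X (a + m) j $ l - X (a + m) i $ l \<le> (?hi - ?lo) * (1 - \<gamma> * (1-\<gamma>)^(m-1) * card {r. r < m \<and> ?sb r})"
    by (rule D.window) (auto simp: om_def fun_eq_iff)
  moreover have G: "Gcount Bs a m \<le> card {r. r < m \<and> ?sb r}"
    unfolding Gcount_def card_shift[of m "\<lambda>r. batch_of (Bs r) i = batch_of (Bs r) j" a]
    by (rule Min_le) (auto intro!: image_eqI[of _ _ "(i, j)"])
  moreover have "?lo \<le> ?hi"
  proof -
    have "?lo \<le> X a i $ l" by (rule Min_le) auto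
    also have "\<dots> \<le> ?hi" by (rule Max_ge) auto
    finally show ?thesis .
  qed
  moreover have "0 \<le> \<gamma> * (1-\<gamma>)^(m-1)" using g0 g1 by simp
  then have "\<gamma> * (1-\<gamma>)^(m-1) * Gcount Bs a m \<le> \<gamma> * (1-\<gamma>)^(m-1) * card {r. r < m \<and> ?sb r}"
    using G by (intro mult_left_mono) auto
  ultimately have "X (a + m) j $ l - X (a + m) i $ l \<le> (?hi - ?lo) * (1 - \<gamma> * (1-\<gamma>)^(m-1) * Gcount Bs a m)"
    by (smt (verit) mult_left_mono)
  then show ?thesis unfolding diamD_def using i j by simp
qed

end


lemma diamD_nonneg: "0 \<le> diamD (Y :: ('n::finite, 'd::finite) config) l"
proof -
  fix i :: 'n
  have "(MIN i. Y i $ l) \<le> Y i $ l" by (rule Min_le) auto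
  also have "\<dots> \<le> (MAX i. Y i $ l)" by (rule Max_ge) auto
  finally show ?thesis unfolding diamD_def by simp
qed

lemma comp_le_diamD: "\<bar>Y i $ l - Y j $ l\<bar> \<le> diamD (Y :: ('n::finite, 'd::finite) config) l"
proof -
  have "\<And>i. (MIN i. Y i $ l) \<le> Y i $ l" by (rule Min_le) auto
  moreover have "\<And>i. Y i $ l \<le> (MAX i. Y i $ l)" by (rule Max_ge) auto
  ultimately show ?thesis unfolding diamD_def
    by (smt (verit))
qed

lemma diamD_le_inf: "diamD (Y :: ('n::finite, 'd::finite) config) l \<le> diam_inf Y"
proof -
  have "(MIN i. Y i $ l) \<in> range (\<lambda>i. Y i $ l)" by (rule Min_in) auto
  then obtain i where i: "Y i $ l = (MIN i. Y i $ l)" by (metis (no_types, lifting) rangeE)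
  have "(MAX i. Y i $ l) \<in> range (\<lambda>i. Y i $ l)" by (rule Max_in) auto
  then obtain j where j: "Y j $ l = (MAX i. Y i $ l)" by (metis (no_types, lifting) rangeE)
  have "diamD Y l \<le> \<bar>(Y j - Y i) $ l\<bar>" unfolding diamD_def using i j by simp
  also have "\<dots> \<le> infnorm (Y j - Y i)" by (rule component_le_infnorm_cart)
  also have "\<dots> \<le> diam_inf Y" unfolding diam_inf_def
    by (rule Max_ge) (auto intro!: image_eqI[of _ _ "(j, i)"])
  finally show ?thesis .
qed

lemma diam_inf_le:
  fixes Y Z :: "('n::finite, 'd::finite) config"
  assumes "\<And>l. diamD Y l \<le> diamD Z l * E" "E \<ge> 0"
  shows "diam_inf Y \<le> diam_inf Z * E"
  unfolding diam_inf_def[of Y]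
proof (rule Max.boundedI)
  fix v assume "v \<in> (\<lambda>ij. infnorm (Y (fst ij) - Y (snd ij))) ` UNIV"
  then obtain i j where v: "v = infnorm (Y i - Y j)" by auto
  have "v = Sup {\<bar>(Y i - Y j) $ l\<bar> |l. l \<in> UNIV}" unfolding v by (rule infnorm_cart)
  also have "\<dots> \<le> diam_inf Z * E"
  proof (rule cSup_least)
    show "{\<bar>(Y i - Y j) $ l\<bar> |l. l \<in> UNIV} \<noteq> {}" by auto
    fix x assume "x \<in> {\<bar>(Y i - Y j) $ l\<bar> |l. l \<in> UNIV}"
    then obtain l where x: "x = \<bar>Y i $ l - Y j $ l\<bar>" by auto
    have "x \<le> diamD Y l" unfolding x by (rule comp_le_diamD)
    also have "\<dots> \<le> diamD Z l * E" by (rule assms)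
    also have "\<dots> \<le> diam_inf Z * E" using diamD_le_inf assms(2) by (rule mult_right_mono)
    finally show "x \<le> diam_inf Z * E" .
  qed
  finally show "v \<le> diam_inf Z * E" .
qed auto

lemma Lambda0_mult: "Lambda0 \<gamma> Bs m0 k * real k = \<gamma> * (1 - \<gamma>) ^ (m0 - 1) * (\<Sum>s=1..k. real (Gcount Bs ((s - 1) * m0) m0))"
  by (simp add: Lambda0_def)

context cbo begin

lemma diam_window_exp:
  "diamD (X (a + m)) l \<le> diamD (X a) l * exp (- (\<gamma> * (1-\<gamma>)^(m-1) * Gcount Bs a m))"
proof -
  have "diamD (X (a + m)) l \<le> diamD (X a) l * (1 - \<gamma> * (1-\<gamma>)^(m-1) * Gcount Bs a m)"
    by (rule diam_window)
  also have "\<dots> \<le> diamD (X a) l * exp (- (\<gamma> * (1-\<gamma>)^(m-1) * Gcount Bs a m))"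
    using diamD_nonneg exp_ge_add_one_self[of "- (\<gamma> * (1-\<gamma>)^(m-1) * Gcount Bs a m)"]
    by (intro mult_left_mono) auto
  finally show ?thesis .
qed

lemma diam_k:
  "diamD (X (k * m0)) l \<le> diamD X0 l * exp (- (\<gamma> * (1-\<gamma>)^(m0-1) * (\<Sum>s=1..k. real (Gcount Bs ((s - 1) * m0) m0))))"
proof (induction k)
  case 0 then show ?case by (simp add: X_def)
next
  case (Suc k)
  let ?c = "\<gamma> * (1-\<gamma>)^(m0-1)"
  have "diamD (X (Suc k * m0)) l = diamD (X (k * m0 + m0)) l" by (simp add: add.commute)
  also have "\<dots> \<le> diamD (X (k * m0)) l * exp (- (?c * Gcount Bs (k * m0) m0))"
    by (rule diam_window_exp)
  also have "\<dots> \<le> diamD X0 l * exp (- (?c * (\<Sum>s=1..k. real (Gcount Bs ((s - 1) * m0) m0)))) * exp (- (?c * Gcount Bs (k * m0) m0))"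
    using Suc by (intro mult_right_mono) auto
  also have "\<dots> = diamD X0 l * exp (- (?c * (\<Sum>s=1..Suc k. real (Gcount Bs ((s - 1) * m0) m0))))"
    by (simp add: algebra_simps exp_add[symmetric])
  finally show ?case .
qed

lemma diam_final:
  assumes "k * m0 \<le> n"
  shows "diamD (X n) l \<le> diamD X0 l * exp (- Lambda0 \<gamma> Bs m0 k * real k)"
proof -
  have "diamD (X n) l = diamD (X (k * m0 + (n - k * m0))) l" using assms by simp
  also have "\<dots> \<le> diamD (X (k * m0)) l" by (rule diam_mono)
  also have "\<dots> \<le> diamD X0 l * exp (- Lambda0 \<gamma> Bs m0 k * real k)"
    using diam_k[where k=k and l=l] by (simp add: Lambda0_mult)
  finally show ?thesis .
qed

lemma inf_final:
  assumes "k * m0 \<le> n"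
  shows "diam_inf (X n) \<le> diam_inf X0 * exp (- Lambda0 \<gamma> Bs m0 k * real k)"
  by (rule diam_inf_le[OF diam_final[OF assms]]) simp

end


lemma card_shift': fixes a m :: nat shows "card {r. r < m \<and> Pr (a + r)} = card {r. a \<le> r \<and> r < a + m \<and> Pr r}"
proof -
  have "{r. a \<le> r \<and> r < a + m \<and> Pr r} = (\<lambda>r. a + r) ` {r. r < m \<and> Pr (a + r)}"
  proof (intro set_eqI iffI)
    fix x assume "x \<in> {r. a \<le> r \<and> r < a + m \<and> Pr r}"
    then have "x = a + (x - a)" "x - a \<in> {r. r < m \<and> Pr (a + r)}" by auto
    then show "x \<in> (\<lambda>r. a + r) ` {r. r < m \<and> Pr (a + r)}" by (rule image_eqI)
  qed auto
  then show ?thesis by (simp add: card_image inj_on_def)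
qed

lemma Gcount_shift: "Gcount f a m = Gcount (\<lambda>r. f (a + r)) 0 m"
  unfolding Gcount_def
proof (intro arg_cong[where f=Min] image_cong refl)
  fix ij :: "'a \<times> 'a"
  show "card {r. a \<le> r \<and> r < a + m \<and> batch_of (f r) (fst ij) = batch_of (f r) (snd ij)} =
    card {r. 0 \<le> r \<and> r < 0 + m \<and> batch_of (f (a + r)) (fst ij) = batch_of (f (a + r)) (snd ij)}"
    using card_shift'[where a=a and m=m and Pr="\<lambda>r. batch_of (f r) (fst ij) = batch_of (f r) (snd ij)"]
    by simp
qed

lemma Gcount_cong: "(\<And>r. r < m \<Longrightarrow> f r = g r) \<Longrightarrow> Gcount f 0 m = Gcount g 0 m"
  unfolding Gcount_def
  by (intro arg_cong[where f=Min] image_cong refl arg_cong[where f=card]) auto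

lemma Gcount_le: "Gcount f a m \<le> m"
proof -
  fix i :: 'a
  have "Gcount f a m \<le> card {r. a \<le> r \<and> r < a + m \<and> batch_of (f r) i = batch_of (f r) i}"
    unfolding Gcount_def by (rule Min_le) (auto intro!: image_eqI[of _ _ "(i, i)"])
  also have "\<dots> \<le> card {a..<a+m}" by (rule card_mono) auto
  finally show ?thesis by simp
qed

lemma meas_fin:
  fixes h :: "'a \<Rightarrow> nat \<Rightarrow> 'b::finite"
  assumes "\<And>r. r < m \<Longrightarrow> (\<lambda>x. h x r) \<in> measurable N (count_space UNIV)"
  shows "(\<lambda>x. g (\<lambda>r\<in>{..<m}. h x r)) \<in> borel_measurable N"
proof -
  let ?A = "PiE {..<m} (\<lambda>_. UNIV :: 'b set)"
  have fin: "finite ?A" by (simp add: finite_PiE)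
  have "(\<lambda>x. \<lambda>r\<in>{..<m}. h x r) \<in> measurable N (count_space ?A)"
    unfolding measurable_count_space_eq2[OF fin]
  proof safe
    fix q assume q: "q \<in> ?A"
    have "(\<lambda>x. \<lambda>r\<in>{..<m}. h x r) -` {q} \<inter> space N = (if m = 0 then space N else (\<Inter>r<m. (\<lambda>x. h x r) -` {q r} \<inter> space N))"
      using q by (auto simp: fun_eq_iff PiE_def extensional_def restrict_def)
    also have "\<dots> \<in> sets N"
      using assms by (auto intro!: sets.finite_INT measurable_sets)
    finally show "(\<lambda>x. \<lambda>r\<in>{..<m}. h x r) -` {q} \<inter> space N \<in> sets N" .
  qed (auto split: if_splits)
  moreover have "g \<in> measurable (count_space ?A) borel" by simp
  ultimately show ?thesis by (rule measurable_compose[where f="\<lambda>x. \<lambda>r\<in>{..<m}. h x r"])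
qed



locale bsetup = prob_space M for M :: "'w measure" +
  fixes B :: "nat \<Rightarrow> 'w \<Rightarrow> 'n::finite set set" and P m0 :: nat
  assumes B_meas: "\<And>n. B n \<in> measurable M (count_space UNIV)"
  and B_range: "\<And>n x. x \<in> space M \<Longrightarrow> B n x \<in> batch_partitions P"
  and B_unif: "\<And>n Q. Q \<in> batch_partitions P \<Longrightarrow>
        measure M {x\<in>space M. B n x = Q} = 1 / real (card (batch_partitions P :: 'n set set set))"
  and B_indep: "indep_vars (\<lambda>_. count_space UNIV) B UNIV"
  and m0: "m0 > 0"
begin

abbreviation "A \<equiv> batch_partitions P :: 'n set set set"
abbreviation "QQ \<equiv> PiE {..<m0} (\<lambda>_. A)"
definition F where "F q = real (Gcount q 0 m0)"
definition Z where "Z a x = real (Gcount (\<lambda>r. B r x) a m0)"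
definition pp where "pp = (\<Sum>q\<in>QQ. F q) / real (card A) ^ m0"

lemma finA: "finite A"
  by (rule finite_subset[of _ UNIV]) auto

lemma Z_eq: "Z a x = F (\<lambda>t\<in>{..<m0}. B (a + t) x)"
  unfolding Z_def F_def by (subst Gcount_shift) (auto intro!: Gcount_cong)

lemma Z_meas[measurable]: "Z a \<in> borel_measurable M"
  unfolding Z_eq[abs_def] by (rule meas_fin) (rule B_meas)

lemma Z_bound: "0 \<le> Z a x \<and> Z a x \<le> m0"
  unfolding Z_def using Gcount_le by auto

lemma Z_int: "integrable M (Z a)"
  by (rule integrable_const_bound[where B=m0]) (use Z_bound in auto)

lemma prob_vec:
  assumes q: "q \<in> QQ"
  shows "prob {x\<in>space M. \<forall>t<m0. B (a + t) x = q t} = (1 / real (card A)) ^ m0"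
proof -
  let ?J = "(\<lambda>t. a + t) ` {..<m0}"
  have "{x\<in>space M. \<forall>t<m0. B (a + t) x = q t} = (\<Inter>i\<in>?J. B i -` {q (i - a)} \<inter> space M)"
    using m0 by auto
  moreover have "prob (\<Inter>i\<in>?J. B i -` {q (i - a)} \<inter> space M) = (\<Prod>i\<in>?J. prob (B i -` {q (i - a)} \<inter> space M))"
    by (rule indep_varsD[OF B_indep]) (use m0 in auto)
  ultimately have "prob {x\<in>space M. \<forall>t<m0. B (a + t) x = q t} = (\<Prod>i\<in>?J. prob (B i -` {q (i - a)} \<inter> space M))"
    by simp
  also have "\<dots> = (\<Prod>i\<in>?J. 1 / real (card A))"
  proof (rule prod.cong[OF refl])
    fix i assume "i \<in> ?J"
    then have "q (i - a) \<in> A" using q by auto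
    moreover have "B i -` {q (i - a)} \<inter> space M = {x\<in>space M. B i x = q (i - a)}" by auto
    ultimately show "prob (B i -` {q (i - a)} \<inter> space M) = 1 / real (card A)"
      using B_unif by simp
  qed
  also have "\<dots> = (1 / real (card A)) ^ m0"
    by (simp add: card_image inj_on_def)
  finally show ?thesis .
qed

lemma Z_expect: "expectation (Z a) = pp"
proof -
  define V where "V x = (\<lambda>t\<in>{..<m0}. B (a + t) x)" for x
  define S where "S q = {x\<in>space M. V x = q}" for q
  have S_eq: "S q = {x\<in>space M. \<forall>t<m0. B (a + t) x = q t}" if "q \<in> QQ" for q
    using that by (auto simp: S_def V_def fun_eq_iff PiE_def extensional_def)
  have S_sets: "S q \<in> sets M" if "q \<in> QQ" for q
    unfolding S_eq[OF that] by measurable (auto intro: B_meas)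
  have VQ: "V x \<in> QQ" if "x \<in> space M" for x
    using B_range[OF that] by (auto simp: V_def)
  have "expectation (Z a) = expectation (\<lambda>x. \<Sum>q\<in>QQ. F q * indicator (S q) x)"
  proof (rule Bochner_Integration.integral_cong[OF refl])
    fix x assume x: "x \<in> space M"
    have "(\<Sum>q\<in>QQ. F q * indicator (S q) x) = (\<Sum>q\<in>QQ. if q = V x then F q else 0)"
      by (intro sum.cong refl) (auto simp: S_def x indicator_def)
    also have "\<dots> = F (V x)" using VQ[OF x] finA by (simp add: sum.delta' finite_PiE)
    finally show "Z a x = (\<Sum>q\<in>QQ. F q * indicator (S q) x)" by (simp add: Z_eq V_def)
  qed
  also have "\<dots> = (\<Sum>q\<in>QQ. F q * prob (S q))"
  proof -
    have "expectation (\<lambda>x. \<Sum>q\<in>QQ. F q * indicator (S q) x) = (\<Sum>q\<in>QQ. expectation (\<lambda>x. F q * indicator (S q) x))"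
      by (rule Bochner_Integration.integral_sum) (auto intro!: integrable_mult_right integrable_real_indicator S_sets simp: emeasure_eq_measure)
    also have "\<dots> = (\<Sum>q\<in>QQ. F q * prob (S q))"
    proof (rule sum.cong[OF refl])
      fix q assume "q \<in> QQ"
      have "S q \<inter> space M = S q" by (auto simp: S_def)
      then show "expectation (\<lambda>x. F q * indicator (S q) x) = F q * prob (S q)"
        by simp
    qed
    finally show ?thesis .
  qed
  also have "\<dots> = (\<Sum>q\<in>QQ. F q * (1 / real (card A)) ^ m0)"
    by (intro sum.cong refl) (simp add: S_eq prob_vec)
  also have "\<dots> = pp" unfolding pp_def by (simp add: sum_divide_distrib power_divide)
  finally show ?thesis .
qed

end


lemma (in prob_space) hoeff_step:
  assumes ind: "indep_vars (\<lambda>_. borel) X UNIV"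
    and bnd: "\<And>s x. 0 \<le> X s x \<and> X s x \<le> c" and c: "c > 0"
    and E: "\<And>s. expectation (X s) = p" and e: "\<epsilon> > 0"
  shows "prob {x\<in>space M. real (Suc n) * \<epsilon> \<le> \<bar>(\<Sum>s\<in>{..<Suc n}. X s x) - real (Suc n) * p\<bar>}
     \<le> 2 * exp (-2 * \<epsilon>\<^sup>2 / c\<^sup>2) ^ Suc n"
proof -
  interpret H: Hoeffding_ineq M "{..<Suc n}" X "\<lambda>_. 0" "\<lambda>_. c" "real (Suc n) * p"
  proof unfold_locales
    show "indep_vars (\<lambda>_. borel) X {..<Suc n}"
      using indep_vars_subset[OF ind] by auto
  qed (use bnd E in auto)
  have "prob {x\<in>space M. real (Suc n) * \<epsilon> \<le> \<bar>(\<Sum>s\<in>{..<Suc n}. X s x) - real (Suc n) * p\<bar>}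
     \<le> 2 * exp (-2 * (real (Suc n) * \<epsilon>)\<^sup>2 / (\<Sum>i\<in>{..<Suc n}. (c - 0)\<^sup>2))"
    by (rule H.Hoeffding_ineq_abs_ge) (use e c in auto)
  also have "-2 * (real (Suc n) * \<epsilon>)\<^sup>2 / (\<Sum>i\<in>{..<Suc n}. (c - 0)\<^sup>2) = real (Suc n) * (-2 * \<epsilon>\<^sup>2 / c\<^sup>2)"
    using c by (simp add: power2_eq_square field_simps del: of_nat_Suc)
  also have "exp \<dots> = exp (-2 * \<epsilon>\<^sup>2 / c\<^sup>2) ^ Suc n" by (rule exp_of_nat_mult)
  finally show ?thesis .
qed

lemma (in prob_space) slln_bounded:
  assumes ind: "indep_vars (\<lambda>_. borel) X UNIV"
    and bnd: "\<And>s x. 0 \<le> X s x \<and> X s x \<le> c" and c: "c > 0"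
    and E: "\<And>s. expectation (X s) = p"
  shows "AE x in M. (\<lambda>k. (\<Sum>s<k. X s x) / real k) \<longlonglongrightarrow> p"
proof -
  have meas[measurable]: "\<And>s. X s \<in> borel_measurable M"
    using ind unfolding indep_vars_def by auto
  define Ev where "Ev e n = {x\<in>space M. real (Suc n) * e \<le> \<bar>(\<Sum>s\<in>{..<Suc n}. X s x) - real (Suc n) * p\<bar>}" for e n
  have ae1: "AE x in M. eventually (\<lambda>n. x \<in> space M - Ev e n) sequentially" if e: "e > 0" for e
  proof (rule borel_cantelli_AE1)
    show "Ev e n \<in> sets M" for n unfolding Ev_def by measurable
    show "emeasure M (Ev e n) < \<infinity>" for n by (simp add: emeasure_eq_measure)
    define q where "q = exp (-2 * e\<^sup>2 / c\<^sup>2)"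
    have q: "0 \<le> q" "q < 1" using e c by (auto simp: q_def)
    have "summable (\<lambda>n. 2 * q ^ Suc n)"
      using q by (intro summable_mult) (simp add: summable_geometric)
    moreover have "norm (prob (Ev e n)) \<le> 2 * q ^ Suc n" for n
      unfolding Ev_def q_def using hoeff_step[OF ind bnd c E e, of n] by simp
    ultimately show "summable (\<lambda>n. prob (Ev e n))"
      by (rule summable_comparison_test')
  qed
  have "AE x in M. \<forall>j::nat. eventually (\<lambda>n. x \<in> space M - Ev (1 / real (Suc j)) n) sequentially"
    using ae1 by (subst AE_all_countable) auto
  then show ?thesis
  proof (rule AE_mp[OF _ AE_I2[OF impI]])
    fix x assume x: "x \<in> space M" and H: "\<forall>j::nat. eventually (\<lambda>n. x \<in> space M - Ev (1 / real (Suc j)) n) sequentially"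
    show "(\<lambda>k. (\<Sum>s<k. X s x) / real k) \<longlonglongrightarrow> p"
    proof (rule tendstoI)
      fix e :: real assume "e > 0"
      then obtain j :: nat where j: "j \<noteq> 0" "inverse (real j) < e" using real_arch_inverse by blast
      obtain N where N: "\<And>n. n \<ge> N \<Longrightarrow> x \<in> space M - Ev (1 / real (Suc j)) n"
        using H[rule_format, of j] by (auto simp: eventually_sequentially)
      show "eventually (\<lambda>k. dist ((\<Sum>s<k. X s x) / real k) p < e) sequentially"
        unfolding eventually_sequentially
      proof (intro exI[of _ "Suc N"] allI impI)
        fix k assume k: "Suc N \<le> k"
        then obtain n where n: "k = Suc n" "N \<le> n" by (cases k) auto
        have "\<not> real (Suc n) * (1 / real (Suc j)) \<le> \<bar>(\<Sum>s\<in>{..<Suc n}. X s x) - real (Suc n) * p\<bar>"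
          using N[OF n(2)] x unfolding Ev_def by auto
        then have lt: "\<bar>(\<Sum>s<Suc n. X s x) - real (Suc n) * p\<bar> < real (Suc n) * (1 / real (Suc j))" by simp
        define S where "S = (\<Sum>s<Suc n. X s x)"
        define NN where "NN = real (Suc n)"
        have NN: "NN > 0" by (simp add: NN_def)
        have "dist ((\<Sum>s<k. X s x) / real k) p = \<bar>S / NN - p\<bar>"
          unfolding n(1) dist_real_def S_def NN_def ..
        also have "S / NN - p = (S - NN * p) / NN" using NN by (simp add: diff_divide_distrib)
        also have "\<bar>(S - NN * p) / NN\<bar> = \<bar>S - NN * p\<bar> / NN" using NN by simp
        also have "\<dots> < (NN * (1 / real (Suc j))) / NN"
          using lt NN unfolding S_def NN_def by (intro divide_strict_right_mono) auto
        also have "\<dots> = 1 / real (Suc j)" using NN by simp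
        also have "\<dots> \<le> inverse (real j)" using j by (simp add: field_simps)
        also have "\<dots> < e" by (rule j)
        finally show "dist ((\<Sum>s<k. X s x) / real k) p < e" .
      qed
    qed
  qed
qed



lemma sum_shift1: fixes k :: nat shows "(\<Sum>s=1..k. f (s - 1)) = (\<Sum>s<k. (f s :: real))"
  by (induction k) (auto simp: sum.lessThan_Suc)

lemma disj_windows:
  assumes "m0 > (0::nat)"
  shows "disjoint_family_on (\<lambda>s. {s * m0..<s * m0 + m0}) UNIV"
  unfolding disjoint_family_on_def
proof (intro ballI impI)
  have aux: "{s * m0..<s * m0 + m0} \<inter> {s' * m0..<s' * m0 + m0} = {}" if "s < s'" for s s' :: nat
  proof -
    have "Suc s * m0 \<le> s' * m0" using that by (intro mult_le_mono1) auto
    then show ?thesis by auto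
  qed
  fix s s' :: nat assume "s \<noteq> s'"
  then show "{s * m0..<s * m0 + m0} \<inter> {s' * m0..<s' * m0 + m0} = {}"
    using aux[of s s'] aux[of s' s] by (cases "s < s'") auto
qed

context bsetup begin

lemma cardA_pos: "card A > 0" if "Q \<in> A" for Q
  using that finA card_gt_0_iff by blast

lemma pp_pos:
  assumes cover: "covering P m0 TYPE('n)"
  shows "pp > 0"
proof -
  obtain Ps :: "nat \<Rightarrow> 'n set set" where Ps: "\<forall>k\<in>{1..m0}. Ps k \<in> A"
    and cov: "\<forall>i j. \<exists>k\<in>{1..m0}. \<exists>S\<in>Ps k. i \<in> S \<and> j \<in> S"
    using cover unfolding covering_def by blast
  define qs where "qs = (\<lambda>t\<in>{..<m0}. Ps (Suc t))"
  have qsQ: "qs \<in> QQ" using Ps by (auto simp: qs_def)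
  have F1: "F qs \<ge> 1"
  proof -
    have "1 \<le> card {r. 0 \<le> r \<and> r < 0 + m0 \<and> batch_of (qs r) i = batch_of (qs r) j}" for i j
    proof -
      obtain k S where k: "k \<in> {1..m0}" "S \<in> Ps k" "i \<in> S" "j \<in> S" using cov by blast
      have part: "partition_on UNIV (Ps k)" using Ps k(1) by (auto intro: bp_partition)
      have "k - 1 \<in> {r. 0 \<le> r \<and> r < 0 + m0 \<and> batch_of (qs r) i = batch_of (qs r) j}"
        using k batch_of_unique[OF part] by (auto simp: qs_def)
      moreover have "finite {r. 0 \<le> r \<and> r < 0 + m0 \<and> batch_of (qs r) i = batch_of (qs r) j}" by auto
      ultimately show ?thesis by (metis One_nat_def Suc_leI card_gt_0_iff empty_iff)
    qed
    then have "1 \<le> Gcount qs 0 m0" unfolding Gcount_def by (auto intro!: Min.boundedI)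
    then show ?thesis unfolding F_def by simp
  qed
  have "F qs \<le> (\<Sum>q\<in>QQ. F q)"
    using qsQ finA by (intro member_le_sum) (auto simp: F_def finite_PiE)
  then have "(\<Sum>q\<in>QQ. F q) > 0" using F1 by linarith
  moreover have "card A > 0" using Ps m0 cardA_pos[of "Ps 1"] by auto
  ultimately show ?thesis unfolding pp_def by simp
qed

lemma Z_indep: "indep_vars (\<lambda>_. borel) (\<lambda>s. Z (s * m0)) UNIV"
proof -
  define K where "K s = {s * m0..<s * m0 + m0}" for s
  have R: "indep_vars (\<lambda>s. PiM (K s) (\<lambda>_. count_space UNIV)) (\<lambda>s \<omega>. restrict (\<lambda>i. B i \<omega>) (K s)) UNIV"
    by (rule indep_vars_restrict[OF B_indep]) (use disj_windows[OF m0] in \<open>auto simp: K_def\<close>)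
  define Y where "Y s f = F (\<lambda>t\<in>{..<m0}. f (s * m0 + t))" for s and f :: "nat \<Rightarrow> 'n set set"
  have Ym: "Y s \<in> borel_measurable (PiM (K s) (\<lambda>_. count_space UNIV))" for s
    unfolding Y_def
    by (rule meas_fin) (auto simp: K_def intro!: measurable_component_singleton)
  have "indep_vars (\<lambda>_. borel) (\<lambda>s x. Y s (restrict (\<lambda>i. B i x) (K s))) UNIV"
    by (rule indep_vars_compose2[OF R Ym])
  moreover have "(\<lambda>x. Y s (restrict (\<lambda>i. B i x) (K s))) = Z (s * m0)" for s
  proof
    fix x
    have "(\<lambda>t\<in>{..<m0}. restrict (\<lambda>i. B i x) (K s) (s * m0 + t)) = (\<lambda>t\<in>{..<m0}. B (s * m0 + t) x)"
      by (auto simp: K_def fun_eq_iff)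
    then show "Y s (restrict (\<lambda>i. B i x) (K s)) = Z (s * m0) x" by (simp add: Y_def Z_eq)
  qed
  ultimately show ?thesis by simp
qed

lemma Lambda_Z: "Lambda0 \<gamma> (\<lambda>r. B r x) m0 k = \<gamma> * (1 - \<gamma>) ^ (m0 - 1) * ((\<Sum>s<k. Z (s * m0) x) / real k)"
proof -
  have "(\<Sum>s=1..k. real (Gcount (\<lambda>r. B r x) ((s - 1) * m0) m0)) = (\<Sum>s<k. Z (s * m0) x)"
    using sum_shift1[where f="\<lambda>s. Z (s * m0) x" and k=k] by (simp add: Z_def)
  then show ?thesis by (simp add: Lambda0_def)
qed

lemma Lambda_lim:
  "AE x in M. (\<lambda>k. Lambda0 \<gamma> (\<lambda>r. B r x) m0 k) \<longlonglongrightarrow> pp * \<gamma> * (1 - \<gamma>) ^ (m0 - 1)"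
proof -
  have "AE x in M. (\<lambda>k. (\<Sum>s<k. Z (s * m0) x) / real k) \<longlonglongrightarrow> pp"
    by (rule slln_bounded[OF Z_indep, where c="real m0"]) (use Z_bound Z_expect m0 in auto)
  then show ?thesis
  proof (rule AE_mp[OF _ AE_I2[OF impI]])
    fix x assume "(\<lambda>k. (\<Sum>s<k. Z (s * m0) x) / real k) \<longlonglongrightarrow> pp"
    then have "(\<lambda>k. \<gamma> * (1 - \<gamma>) ^ (m0 - 1) * ((\<Sum>s<k. Z (s * m0) x) / real k)) \<longlonglongrightarrow> \<gamma> * (1 - \<gamma>) ^ (m0 - 1) * pp"
      by (intro tendsto_mult_left)
    then show "(\<lambda>k. Lambda0 \<gamma> (\<lambda>r. B r x) m0 k) \<longlonglongrightarrow> pp * \<gamma> * (1 - \<gamma>) ^ (m0 - 1)"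
      by (simp add: Lambda_Z mult_ac)
  qed
qed

end

theorem theorem3p1:
  fixes M :: "'w measure"
    and P m0 :: nat
    and \<gamma> \<zeta> :: real
    and w :: "'n::finite set \<Rightarrow> 'n \<Rightarrow> ('n \<Rightarrow> real^'d::finite) \<Rightarrow> real"
    and B :: "nat \<Rightarrow> 'w \<Rightarrow> 'n set set"
    and \<eta> :: "nat \<Rightarrow> 'n \<Rightarrow> 'd \<Rightarrow> 'w \<Rightarrow> real"
    and X0 :: "'w \<Rightarrow> ('n \<Rightarrow> real^'d)"
  assumes "prob_space M"
    and "CARD('n) \<ge> 2" and "P \<ge> 2"
    and "0 < \<gamma>" and "\<gamma> < 1" and "\<zeta> \<ge> 0"
    and w_nonneg: "\<And>S j X. S \<noteq> {} \<Longrightarrow> w S j X \<ge> 0"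
    and w_sum: "\<And>S X. S \<noteq> {} \<Longrightarrow> (\<Sum>j\<in>S. w S j X) = 1"
    and w_out: "\<And>S j X. S \<noteq> {} \<Longrightarrow> j \<notin> S \<Longrightarrow> w S j X = 0"
    and B_meas: "\<And>n. B n \<in> measurable M (count_space UNIV)"
    and B_range: "\<And>n x. x \<in> space M \<Longrightarrow> B n x \<in> batch_partitions P"
    and B_unif: "\<And>n Q. Q \<in> batch_partitions P \<Longrightarrow>
        measure M {x\<in>space M. B n x = Q} = 1 / real (card (batch_partitions P :: 'n set set set))"
    and B_indep: "prob_space.indep_vars M (\<lambda>_. count_space UNIV) B UNIV"
    and eta_meas: "\<And>n i l. \<eta> n i l \<in> borel_measurable M"
    and eta_int: "\<And>n i l. integrable M (\<eta> n i l)"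
    and eta_mean: "\<And>n i l. (\<integral>x. \<eta> n i l x \<partial>M) = 0"
    and eta_var: "\<And>n i l. integrable M (\<lambda>x. (\<eta> n i l x)\<^sup>2) \<and> (\<integral>x. (\<eta> n i l x)\<^sup>2 \<partial>M) \<le> \<zeta>\<^sup>2"
    and eta_zero: "\<And>n i l. AE x in M. \<eta> n i l x = 0"
    and "m0 > 0"
    and cover: "covering P m0 TYPE('n)"
  shows "(\<integral>x. real (Gcount (\<lambda>r. B r x) 0 m0) \<partial>M) > 0
    \<and> (\<forall>k n l. k * m0 \<le> n \<and> n < (k + 1) * m0 \<longrightarrow>
        (AE x in M.
          diamD (cbo_traj w \<gamma> (\<lambda>r. B r x) (\<lambda>r i l. \<eta> r i l x) (X0 x) n) l
            \<le> diamD (X0 x) l * exp (- Lambda0 \<gamma> (\<lambda>r. B r x) m0 k * real k)))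
    \<and> (\<forall>k n. k * m0 \<le> n \<and> n < (k + 1) * m0 \<longrightarrow>
        (AE x in M.
          diam_inf (cbo_traj w \<gamma> (\<lambda>r. B r x) (\<lambda>r i l. \<eta> r i l x) (X0 x) n)
            \<le> diam_inf (X0 x) * exp (- Lambda0 \<gamma> (\<lambda>r. B r x) m0 k * real k)))
    \<and> (AE x in M. (\<lambda>k. Lambda0 \<gamma> (\<lambda>r. B r x) m0 k) \<longlonglongrightarrow>
        (\<integral>x. real (Gcount (\<lambda>r. B r x) 0 m0) \<partial>M) * \<gamma> * (1 - \<gamma>) ^ (m0 - 1))"
  proof -
  interpret prob_space M by fact
  interpret BS: bsetup M B P m0
    by unfold_locales (use B_meas B_range B_unif B_indep \<open>m0 > 0\<close> in auto)
  have Eq: "(\<integral>x. real (Gcount (\<lambda>r. B r x) 0 m0) \<partial>M) = BS.pp"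
  proof -
    have zeq: "BS.Z 0 = (\<lambda>x. real (Gcount (\<lambda>r. B r x) 0 m0))" by (rule ext) (simp add: BS.Z_def)
    show ?thesis using BS.Z_expect[of 0] unfolding zeq .
  qed
  have part1: "(\<integral>x. real (Gcount (\<lambda>r. B r x) 0 m0) \<partial>M) > 0"
    unfolding Eq by (rule BS.pp_pos[OF cover])
  have eta0: "AE x in M. \<forall>r i l. \<eta> r i l x = 0"
    using eta_zero by (simp add: AE_all_countable)
  have det: "AE x in M. (\<forall>l. diamD (cbo_traj w \<gamma> (\<lambda>r. B r x) (\<lambda>r i l. \<eta> r i l x) (X0 x) n) l
            \<le> diamD (X0 x) l * exp (- Lambda0 \<gamma> (\<lambda>r. B r x) m0 k * real k))
         \<and> diam_inf (cbo_traj w \<gamma> (\<lambda>r. B r x) (\<lambda>r i l. \<eta> r i l x) (X0 x) n)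
            \<le> diam_inf (X0 x) * exp (- Lambda0 \<gamma> (\<lambda>r. B r x) m0 k * real k)"
    if kn: "k * m0 \<le> n" for k n
    using eta0
  proof (rule AE_mp[OF _ AE_I2[OF impI]])
    fix x assume x: "x \<in> space M" and z: "\<forall>r i l. \<eta> r i l x = 0"
    then have z': "(\<lambda>r i l. \<eta> r i l x) = (\<lambda>_ _ _. 0)" by (simp add: fun_eq_iff)
    interpret C: cbo w \<gamma> "\<lambda>r. B r x" "X0 x"
      by unfold_locales (use \<open>0 < \<gamma>\<close> \<open>\<gamma> < 1\<close> w_nonneg w_sum w_out in \<open>auto intro: bp_partition[OF B_range[OF x]]\<close>)
    show "(\<forall>l. diamD (cbo_traj w \<gamma> (\<lambda>r. B r x) (\<lambda>r i l. \<eta> r i l x) (X0 x) n) l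
            \<le> diamD (X0 x) l * exp (- Lambda0 \<gamma> (\<lambda>r. B r x) m0 k * real k))
         \<and> diam_inf (cbo_traj w \<gamma> (\<lambda>r. B r x) (\<lambda>r i l. \<eta> r i l x) (X0 x) n)
            \<le> diam_inf (X0 x) * exp (- Lambda0 \<gamma> (\<lambda>r. B r x) m0 k * real k)"
      using C.diam_final[OF kn] C.inf_final[OF kn] unfolding z' C.X_def by blast
  qed
  show ?thesis
  proof (intro conjI allI impI)
    show "(\<integral>x. real (Gcount (\<lambda>r. B r x) 0 m0) \<partial>M) > 0" by (rule part1)
  next
    fix k n l assume "k * m0 \<le> n \<and> n < (k + 1) * m0"
    then show "AE x in M. diamD (cbo_traj w \<gamma> (\<lambda>r. B r x) (\<lambda>r i l. \<eta> r i l x) (X0 x) n) l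
            \<le> diamD (X0 x) l * exp (- Lambda0 \<gamma> (\<lambda>r. B r x) m0 k * real k)"
      using det[of k n] by (auto elim: AE_mp)
  next
    fix k n assume "k * m0 \<le> n \<and> n < (k + 1) * m0"
    then show "AE x in M. diam_inf (cbo_traj w \<gamma> (\<lambda>r. B r x) (\<lambda>r i l. \<eta> r i l x) (X0 x) n)
            \<le> diam_inf (X0 x) * exp (- Lambda0 \<gamma> (\<lambda>r. B r x) m0 k * real k)"
      using det[of k n] by (auto elim: AE_mp)
  next
    show "AE x in M. (\<lambda>k. Lambda0 \<gamma> (\<lambda>r. B r x) m0 k) \<longlonglongrightarrow>
        (\<integral>x. real (Gcount (\<lambda>r. B r x) 0 m0) \<partial>M) * \<gamma> * (1 - \<gamma>) ^ (m0 - 1)"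
      unfolding Eq by (rule BS.Lambda_lim)
  qed
qed

end
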